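(* Let $\alpha,\beta$ be linear subspaces of $\mathbb{R}^n$ with $\dim\alpha<\dim\beta$. Then for any $d>1$ and $C_1,C_2>0$, $$\lim_{\epsilon\to0}\frac{\mathrm{Vol}(ST_d(\alpha;C_1)\cap B_\epsilon(0))}{\mathrm{Vol}(ST_d(\beta;C_2)\cap B_\epsilon(0))}=0.$$
   Context: Sea-tangle neighbourhood: $ST_d(X;C)=\{x\in\mathbb{R}^n : \mathrm{dist}(x,X)\le C|x|^d\}$. $B_\epsilon(0)$ is the ball of radius $\epsilon$ centred at $0$ and $\mathrm{Vol}$ is Lebesgue measure on $\mathbb{R}^n$. *)

theory Defs
  imports "HOL-Analysis.Analysis"
begin

definition sea_tangle :: "real \<Rightarrow> 'a::euclidean_space set \<Rightarrow> real \<Rightarrow> 'a set" where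
  "sea_tangle d X C = {x. infdist x X \<le> C * norm x powr d}"

end

theory Submission
  imports Defs
begin

lemma orth_coord:
  fixes B :: "'a::euclidean_space set"
  assumes "finite B" "pairwise orthogonal B" "\<And>b. b \<in> B \<Longrightarrow> norm b = 1" "b0 \<in> B"
  shows "(\<Sum>b\<in>B. c b *\<^sub>R b) \<bullet> b0 = c b0"
proof -
  have "(\<Sum>b\<in>B. c b *\<^sub>R b) \<bullet> b0 = (\<Sum>b\<in>B. c b * (b \<bullet> b0))"
    by (simp add: inner_sum_left)
  also have "\<dots> = c b0 * (b0 \<bullet> b0) + (\<Sum>b\<in>B-{b0}. c b * (b \<bullet> b0))"
    using assms by (simp add: sum.remove)
  also have "(\<Sum>b\<in>B-{b0}. c b * (b \<bullet> b0)) = 0"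
    using assms(2,4) by (intro sum.neutral) (auto simp: pairwise_def orthogonal_def)
  also have "b0 \<bullet> b0 = 1" using assms(3)[OF assms(4)] by (simp add: norm_eq_sqrt_inner)
  finally show ?thesis by simp
qed

lemma span_expand:
  fixes B :: "'a::euclidean_space set"
  assumes "finite B" "pairwise orthogonal B" "\<And>b. b \<in> B \<Longrightarrow> norm b = 1" "y \<in> span B"
  shows "y = (\<Sum>b\<in>B. (y \<bullet> b) *\<^sub>R b)"
proof -
  obtain c where c: "y = (\<Sum>b\<in>B. c b *\<^sub>R b)"
    using assms(4) span_finite[OF assms(1)] by auto
  have "\<And>b. b \<in> B \<Longrightarrow> y \<bullet> b = c b" using orth_coord[OF assms(1-3)] c by simp
  then show ?thesis using c by (metis (no_types, lifting) sum.cong)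
qed

lemma coord_le_norm:
  fixes x b :: "'a::euclidean_space"
  assumes "norm b = 1" shows "\<bar>x \<bullet> b\<bar> \<le> norm x"
  using Cauchy_Schwarz_ineq2[of x b] assms by simp

lemma measure_le_fm:
  assumes "A \<subseteq> B" "B \<in> fmeasurable M"
  shows "measure M A \<le> measure M B"
proof (cases "A \<in> sets M")
  case True then show ?thesis using assms measure_mono_fmeasurable fmeasurableD by blast
next
  case False then show ?thesis by (simp add: measure_notin_sets)
qed

lemma measure_ball_lebesgue:
  fixes c :: "'a::euclidean_space"
  assumes "r \<ge> 0"
  shows "measure lebesgue (ball c r) = r ^ DIM('a) * measure lborel (ball (0::'a) 1)"
  using content_ball_conv_unit_ball[OF assms] by (simp add: measure_completion)

lemma closed_sea_tangle:
  fixes S :: "'a::euclidean_space set"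
  assumes "d > 0"
  shows "closed (sea_tangle d S C)"
proof -
  have "continuous_on UNIV (\<lambda>x::'a. norm x powr d)"
    using assms by (intro continuous_on_powr') (auto intro: continuous_intros)
  then have "continuous_on UNIV (\<lambda>x::'a. infdist x S - C * norm x powr d)"
    by (intro continuous_on_diff continuous_on_mult continuous_on_const continuous_on_infdist continuous_on_id)
  then have "closed {x::'a. infdist x S - C * norm x powr d \<le> 0}"
    by (intro closed_Collect_le) (auto intro: continuous_intros)
  then show ?thesis unfolding sea_tangle_def by simp
qed

lemma upper_tube:
  fixes S :: "'a::euclidean_space set"
  assumes S: "subspace S" and \<delta>: "0 < \<delta>" "\<delta> \<le> \<epsilon>"
    and A: "A \<subseteq> {x. infdist x S \<le> \<delta> \<and> norm x < \<epsilon>}"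
  shows "measure lebesgue A
    \<le> (9*\<epsilon>/\<delta>)^(dim S) * ((real (dim S)+2)*\<delta>)^DIM('a) * measure lborel (ball (0::'a) 1)"
proof -
  obtain B where B: "B \<subseteq> S" "pairwise orthogonal B" "\<And>x. x \<in> B \<Longrightarrow> norm x = 1"
    "independent B" "card B = dim S" "span B = S"
    using orthonormal_basis_subspace[OF S] by metis
  have fB: "finite B" using B(4) independent_imp_finite by blast
  define k where "k = dim S"
  define M :: int where "M = ceiling (2*\<epsilon>/\<delta>) + 1"
  define Z where "Z = PiE B (\<lambda>_. {-M..M})"
  define g where "g z = (\<Sum>b\<in>B. (\<delta> * of_int (z b)) *\<^sub>R b)" for z :: "'a \<Rightarrow> int"
  define R where "R = (real k + 2) * \<delta>"
  have cover: "{x. infdist x S \<le> \<delta> \<and> norm x < \<epsilon>} \<subseteq> (\<Union>z\<in>Z. ball (g z) R)"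
  proof
    fix x assume "x \<in> {x. infdist x S \<le> \<delta> \<and> norm x < \<epsilon>}"
    then have x: "infdist x S \<le> \<delta>" "norm x < \<epsilon>" by auto
    obtain y where y: "y \<in> S" "infdist x S = dist x y"
      using infdist_attains_inf[OF closed_subspace[OF S], of x] subspace_0[OF S] by blast
    have ny: "norm y < 2*\<epsilon>"
    proof -
      have "norm y \<le> norm x + norm (y - x)" using norm_triangle_sub[of y x] by simp
      moreover have "norm (y - x) = dist x y" by (simp add: dist_norm norm_minus_commute)
      ultimately show ?thesis using x y \<delta> by linarith
    qed
    define z where "z = (\<lambda>b\<in>B. round (y \<bullet> b / \<delta>))"
    have zB: "\<bar>z b\<bar> \<le> M" if "b \<in> B" for b
    proof -
      have "\<bar>y \<bullet> b\<bar> \<le> norm y" using coord_le_norm B(3) that by blast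
      then have "\<bar>y \<bullet> b / \<delta>\<bar> \<le> 2*\<epsilon>/\<delta>" using ny \<delta> by (simp add: abs_divide divide_right_mono)
      moreover have "\<bar>of_int (round (y \<bullet> b / \<delta>)) - y \<bullet> b / \<delta>\<bar> \<le> 1/2" by (rule of_int_round_abs_le)
      moreover have "2*\<epsilon>/\<delta> \<le> of_int (ceiling (2*\<epsilon>/\<delta>))" by simp
      ultimately have "\<bar>real_of_int (round (y \<bullet> b / \<delta>))\<bar> \<le> real_of_int M"
        unfolding M_def by linarith
      then have "\<bar>real_of_int (z b)\<bar> \<le> real_of_int M"
        using that unfolding z_def by simp
      then show ?thesis by linarith
    qed
    have zZ: "z \<in> Z" unfolding Z_def proof (intro PiE_I)
      fix b assume "b \<in> B" then show "z b \<in> {-M..M}" 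
      proof -
        have "\<bar>z b\<bar> \<le> M" using zB \<open>b \<in> B\<close> by blast
        then have "-M \<le> z b" "z b \<le> M" by linarith+
        then show ?thesis by simp
      qed
    qed (simp add: z_def)
    have yexp: "y = (\<Sum>b\<in>B. (y \<bullet> b) *\<^sub>R b)"
      using span_expand[OF fB B(2) B(3)] y(1) B(6) by blast
    have "y - g z = (\<Sum>b\<in>B. (y \<bullet> b) *\<^sub>R b) - g z" by (simp only: yexp[symmetric])
    also have "\<dots> = (\<Sum>b\<in>B. (y \<bullet> b - \<delta> * of_int (z b)) *\<^sub>R b)"
      by (simp only: g_def sum_subtractf[symmetric] scaleR_diff_left)
    also have "norm \<dots> \<le> (\<Sum>b\<in>B. norm ((y \<bullet> b - \<delta> * of_int (z b)) *\<^sub>R b))"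
      by (rule norm_sum)
    also have "\<dots> \<le> (\<Sum>b\<in>B. \<delta>)"
    proof (rule sum_mono)
      fix b assume b: "b \<in> B"
      have "\<bar>of_int (round (y \<bullet> b / \<delta>)) - y \<bullet> b / \<delta>\<bar> \<le> 1/2" by (rule of_int_round_abs_le)
      then have "\<bar>\<delta> * of_int (round (y \<bullet> b / \<delta>)) - y \<bullet> b\<bar> \<le> \<delta>/2"
      proof -
        have "\<delta> * of_int (round (y \<bullet> b / \<delta>)) - y \<bullet> b = \<delta> * (of_int (round (y \<bullet> b / \<delta>)) - y \<bullet> b / \<delta>)"
          using \<delta> by (simp add: algebra_simps)
        then have "\<bar>\<delta> * of_int (round (y \<bullet> b / \<delta>)) - y \<bullet> b\<bar> = \<delta> * \<bar>of_int (round (y \<bullet> b / \<delta>)) - y \<bullet> b / \<delta>\<bar>"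
          using \<delta> by (simp add: abs_mult)
        moreover have "\<delta> * \<bar>of_int (round (y \<bullet> b / \<delta>)) - y \<bullet> b / \<delta>\<bar> \<le> \<delta> * (1/2)"
          using \<open>\<bar>of_int (round (y \<bullet> b / \<delta>)) - y \<bullet> b / \<delta>\<bar> \<le> 1/2\<close> \<delta> by (intro mult_left_mono) auto
        ultimately show ?thesis by simp
      qed
      then have "\<bar>y \<bullet> b - \<delta> * of_int (round (y \<bullet> b / \<delta>))\<bar> \<le> \<delta>"
        using \<delta> by (subst abs_minus_commute) linarith
      then show "norm ((y \<bullet> b - \<delta> * of_int (z b)) *\<^sub>R b) \<le> \<delta>"
        using b B(3) unfolding z_def by simp
    qed
    also have "\<dots> = real k * \<delta>" using B(5) k_def by simp
    finally have "dist y (g z) \<le> real k * \<delta>" by (simp add: dist_norm)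
    moreover have "dist (g z) x \<le> dist (g z) y + dist y x" by (rule dist_triangle)
    moreover have "dist (g z) y = dist y (g z)" "dist y x = dist x y" by (simp_all add: dist_commute)
    moreover have "R = real k * \<delta> + 2 * \<delta>" unfolding R_def by (simp add: algebra_simps)
    ultimately have "dist (g z) x < R" using x y \<delta> by linarith
    then show "x \<in> (\<Union>z\<in>Z. ball (g z) R)" using zZ by auto
  qed
  have Mpos: "M \<ge> 1"
  proof -
    have "0 \<le> 2*\<epsilon>/\<delta>" using \<delta> by simp
    then have "0 \<le> ceiling (2*\<epsilon>/\<delta>)" by simp
    then show ?thesis unfolding M_def by linarith
  qed
  have fZ: "finite Z" unfolding Z_def using fB by (simp add: finite_PiE)
  have cardZ: "real (card Z) = (2 * of_int M + 1)^k"
  proof -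
    have "card Z = nat (2*M+1)^card B" unfolding Z_def using fB by (simp add: card_PiE)
    moreover have "M \<ge> 0" using Mpos by simp
    ultimately show ?thesis using B(5) k_def by simp
  qed
  have "measure lebesgue A \<le> measure lebesgue (\<Union>z\<in>Z. ball (g z) R)"
    by (rule measure_le_fm[OF order_trans[OF A cover]], rule fmeasurable.finite_UN[OF fZ]) (rule lmeasurable_ball)
  also have "\<dots> \<le> (\<Sum>z\<in>Z. measure lebesgue (ball (g z) R))"
    by (rule measure_UNION_le[OF fZ]) (rule fmeasurableD[OF lmeasurable_ball])
  also have "\<dots> = real (card Z) * (R ^ DIM('a) * measure lborel (ball (0::'a) 1))"
  proof -
    have "R \<ge> 0" using \<delta> unfolding R_def by simp
    then have "\<And>z. measure lebesgue (ball (g z) R) = R ^ DIM('a) * measure lborel (ball (0::'a) 1)"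
      by (rule measure_ball_lebesgue)
    then show ?thesis by (simp only: sum_constant)
  qed
  also have "\<dots> \<le> (9*\<epsilon>/\<delta>)^k * (R ^ DIM('a) * measure lborel (ball (0::'a) 1))"
  proof (rule mult_right_mono)
    have "2 * of_int M + 1 \<le> 9*\<epsilon>/\<delta>"
    proof -
      have "of_int M \<le> 2*\<epsilon>/\<delta> + 2" unfolding M_def by linarith
      moreover have "1 \<le> \<epsilon>/\<delta>" using \<delta> by simp
      moreover have "2*\<epsilon>/\<delta> = 2*(\<epsilon>/\<delta>)" "9*\<epsilon>/\<delta> = 9*(\<epsilon>/\<delta>)" by simp_all
      ultimately show ?thesis by linarith
    qed
    moreover have "0 \<le> 2 * of_int M + (1::real)" using Mpos by simp
    ultimately show "real (card Z) \<le> (9*\<epsilon>/\<delta>)^k" unfolding cardZ by (rule power_mono)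
    show "0 \<le> R ^ DIM('a) * measure lborel (ball (0::'a) 1)" using \<delta> unfolding R_def by simp
  qed
  finally show ?thesis unfolding R_def k_def by simp
qed

lemma sea_lmeasurable:
  fixes S :: "'a::euclidean_space set"
  assumes "d > 0"
  shows "sea_tangle d S C \<inter> ball 0 \<epsilon> \<in> lmeasurable"
proof -
  have cpt: "sea_tangle d S C \<inter> cball 0 \<epsilon> \<in> lmeasurable"
    by (intro lmeasurable_compact closed_Int_compact closed_sea_tangle assms compact_cball)
  have "sea_tangle d S C \<inter> ball 0 \<epsilon> = (sea_tangle d S C \<inter> cball 0 \<epsilon>) \<inter> ball 0 \<epsilon>" by auto
  also have "\<dots> \<in> sets lebesgue" using cpt by (intro sets.Int fmeasurableD lmeasurable_ball)
  finally have "sea_tangle d S C \<inter> ball 0 \<epsilon> \<in> sets lebesgue" .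
  moreover have "sea_tangle d S C \<inter> ball 0 \<epsilon> \<subseteq> sea_tangle d S C \<inter> cball 0 \<epsilon>" by auto
  ultimately show ?thesis using fmeasurableI2[OF cpt] by blast
qed

lemma lower_tube:
  fixes S :: "'a::euclidean_space set"
  assumes S: "subspace S" and m1: "dim S \<ge> 1" and C: "C > 0" and d: "d > 0"
    and \<epsilon>: "\<epsilon> > 0" and r: "r > 0" "r \<le> C * (\<epsilon>/4) powr d" "16 * real (dim S) * r \<le> \<epsilon>"
  shows "(\<epsilon>/(16 * real (dim S) * r))^(dim S) * r^DIM('a) * measure lborel (ball (0::'a) 1)
     \<le> measure lebesgue (sea_tangle d S C \<inter> ball 0 \<epsilon>)"
proof -
  obtain B where B: "B \<subseteq> S" "pairwise orthogonal B" "\<And>x. x \<in> B \<Longrightarrow> norm x = 1"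
    "independent B" "card B = dim S" "span B = S"
    using orthonormal_basis_subspace[OF S] by metis
  have fB: "finite B" using B(4) independent_imp_finite by blast
  define m where "m = dim S"
  have "card B \<noteq> 0" using B(5) m1 by linarith
  then have "B \<noteq> {}" by auto
  then obtain b0 where b0: "b0 \<in> B" by blast
  define q where "q = \<epsilon> / (8 * real m * r)"
  have mpos: "real m \<ge> 1" using m1 m_def by simp
  have r3: "16 * real m * r \<le> \<epsilon>" using r(3) unfolding m_def .
  have pos8: "0 < 8 * real m * r" using mpos r by simp
  have q2: "q \<ge> 2" unfolding q_def using r3 by (subst pos_le_divide_eq[OF pos8]) linarith
  define N :: nat where "N = nat (floor q)"
  have Nle: "real N \<le> q" unfolding N_def using q2 by linarith
  have Nge: "real N \<ge> q / 2" unfolding N_def using q2 by linarith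
  define Z where "Z = PiE B (\<lambda>_. {..<N})"
  define p where "p z = (\<epsilon>/2) *\<^sub>R b0 + (\<Sum>b\<in>B. (2 * r * real (z b)) *\<^sub>R b)" for z :: "'a \<Rightarrow> nat"
  have b0b0: "b0 \<bullet> b0 = 1" using B(3)[OF b0] by (simp add: norm_eq_sqrt_inner)
  have pb0: "p z \<bullet> b0 = \<epsilon>/2 + 2 * r * real (z b0)" for z
    unfolding p_def using orth_coord[OF fB B(2) B(3) b0] b0b0 by (simp add: inner_add_left)
  have pdiff: "(p z - p w) \<bullet> b = 2 * r * (real (z b) - real (w b))" if "b \<in> B" for z w b
  proof -
    have "p z - p w = (\<Sum>b\<in>B. (2 * r * real (z b)) *\<^sub>R b) - (\<Sum>b\<in>B. (2 * r * real (w b)) *\<^sub>R b)"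
      unfolding p_def by simp
    also have "\<dots> = (\<Sum>b\<in>B. (2 * r * real (z b) - 2 * r * real (w b)) *\<^sub>R b)"
      by (simp only: sum_subtractf[symmetric] scaleR_diff_left)
    finally show ?thesis using orth_coord[OF fB B(2) B(3) that] by (simp add: right_diff_distrib)
  qed
  have pS: "p z \<in> S" for z
    unfolding p_def B(6)[symmetric] using b0
    by (intro span_add span_scale span_sum span_base) auto
  have npz_le: "norm (p z) \<le> 3 * \<epsilon> / 4" if "z \<in> Z" for z
  proof -
    have "norm (p z) \<le> norm ((\<epsilon>/2) *\<^sub>R b0) + norm (\<Sum>b\<in>B. (2 * r * real (z b)) *\<^sub>R b)"
      unfolding p_def by (rule norm_triangle_ineq)
    also have "norm ((\<epsilon>/2) *\<^sub>R b0) = \<epsilon>/2" using B(3)[OF b0] \<epsilon> by simp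
    also have "norm (\<Sum>b\<in>B. (2 * r * real (z b)) *\<^sub>R b) \<le> (\<Sum>b\<in>B. norm ((2 * r * real (z b)) *\<^sub>R b))"
      by (rule norm_sum)
    also have "\<dots> \<le> (\<Sum>b\<in>B. 2 * r * q)"
    proof (rule sum_mono)
      fix b assume b: "b \<in> B"
      have "z b < N" using that b unfolding Z_def by auto
      then have "real (z b) \<le> q" using Nle by linarith
      then show "norm ((2 * r * real (z b)) *\<^sub>R b) \<le> 2 * r * q"
        using B(3)[OF b] r by simp
    qed
    also have "\<dots> = real m * (2 * r * q)" using B(5) unfolding m_def by simp
    also have "\<dots> = \<epsilon>/4" using r mpos unfolding q_def by (simp add: field_simps)
    finally show ?thesis by simp
  qed
  have npz_ge: "norm (p z) \<ge> \<epsilon>/2" for z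
  proof -
    have "p z \<bullet> b0 \<le> norm (p z)" using coord_le_norm[OF B(3)[OF b0], of "p z"] by linarith
    moreover have "p z \<bullet> b0 \<ge> \<epsilon>/2" unfolding pb0 using r by simp
    ultimately show ?thesis by linarith
  qed
  have r16: "r \<le> \<epsilon>/16"
  proof -
    have "r * 1 \<le> r * real m" by (rule mult_left_mono[OF mpos]) (use r in simp)
    then show ?thesis using r3 by (simp add: algebra_simps)
  qed
  have sub: "ball (p z) r \<subseteq> sea_tangle d S C \<inter> ball 0 \<epsilon>" if "z \<in> Z" for z
  proof
    fix x assume "x \<in> ball (p z) r"
    then have dx: "dist (p z) x < r" by simp
    have nx1: "norm x \<le> norm (p z) + dist (p z) x"
      using norm_triangle_sub[of x "p z"] by (simp add: dist_norm norm_minus_commute)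
    have nx2: "norm (p z) \<le> norm x + dist (p z) x"
      using norm_triangle_sub[of "p z" x] by (simp add: dist_norm)
    have "norm x < \<epsilon>" using nx1 dx npz_le[OF that] r16 \<epsilon> by linarith
    moreover have "infdist x S \<le> C * norm x powr d"
    proof -
      have "infdist x S \<le> dist x (p z)" by (rule infdist_le[OF pS])
      also have "\<dots> \<le> r" using dx by (simp add: dist_commute)
      also have "\<dots> \<le> C * (\<epsilon>/4) powr d" by (rule r)
      also have "\<dots> \<le> C * norm x powr d"
      proof -
        have "\<epsilon>/4 \<le> norm x" using nx2 dx npz_ge[of z] r16 \<epsilon> by linarith
        then have "(\<epsilon>/4) powr d \<le> norm x powr d" using \<epsilon> d by (intro powr_mono2) auto
        then show ?thesis using C by simp
      qed
      finally show ?thesis .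
    qed
    ultimately show "x \<in> sea_tangle d S C \<inter> ball 0 \<epsilon>" unfolding sea_tangle_def by simp
  qed
  have disj: "disjoint_family_on (\<lambda>z. ball (p z) r) Z"
    unfolding disjoint_family_on_def
  proof (intro ballI impI)
    fix z w assume z: "z \<in> Z" and w: "w \<in> Z" and zw: "z \<noteq> w"
    then obtain b where b: "b \<in> B" "z b \<noteq> w b" unfolding Z_def using PiE_ext by metis
    have "1 \<le> \<bar>real (z b) - real (w b)\<bar>" using b(2) by linarith
    then have "2 * r \<le> \<bar>(p z - p w) \<bullet> b\<bar>" unfolding pdiff[OF b(1)] using r by (simp add: abs_mult)
    also have "\<dots> \<le> norm (p z - p w)" by (rule coord_le_norm[OF B(3)[OF b(1)]])
    finally have far: "2 * r \<le> dist (p z) (p w)" by (simp add: dist_norm)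
    show "ball (p z) r \<inter> ball (p w) r = {}"
    proof (rule ccontr)
      assume "ball (p z) r \<inter> ball (p w) r \<noteq> {}"
      then obtain x where "dist (p z) x < r" "dist (p w) x < r" by auto
      moreover have "dist (p z) (p w) \<le> dist (p z) x + dist (p w) x" using dist_triangle[of "p z" "p w" x] by (simp add: dist_commute)
      ultimately show False using far by linarith
    qed
  qed
  have fZ: "finite Z" unfolding Z_def using fB by (simp add: finite_PiE)
  have cardZ: "card Z = N ^ m" unfolding Z_def using fB B(5) m_def by (simp add: card_PiE)
  have "measure lebesgue (\<Union>z\<in>Z. ball (p z) r) = (\<Sum>z\<in>Z. measure lebesgue (ball (p z) r))"
    by (rule measure_finite_Union[OF fZ]) (use disj emeasure_lborel_ball_finite less_top in auto)
  also have "\<dots> = real (card Z) * (r ^ DIM('a) * measure lborel (ball (0::'a) 1))"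
  proof -
    have "\<And>z. measure lebesgue (ball (p z) r) = r ^ DIM('a) * measure lborel (ball (0::'a) 1)"
      using r by (intro measure_ball_lebesgue) auto
    then show ?thesis by (simp only: sum_constant)
  qed
  finally have eqU: "measure lebesgue (\<Union>z\<in>Z. ball (p z) r) = real N ^ m * (r ^ DIM('a) * measure lborel (ball (0::'a) 1))"
    unfolding cardZ by simp
  have "(\<epsilon>/(16 * real m * r))^m \<le> real N ^ m"
  proof (rule power_mono)
    show "\<epsilon>/(16 * real m * r) \<le> real N" using Nge unfolding q_def by (simp add: field_simps)
    show "0 \<le> \<epsilon>/(16 * real m * r)" using \<epsilon> r by simp
  qed
  then have "(\<epsilon>/(16 * real m * r))^m * r^DIM('a) * measure lborel (ball (0::'a) 1)
     \<le> measure lebesgue (\<Union>z\<in>Z. ball (p z) r)"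
    unfolding eqU using r by (simp add: mult.assoc mult_right_mono)
  also have "\<dots> \<le> measure lebesgue (sea_tangle d S C \<inter> ball 0 \<epsilon>)"
    by (rule measure_le_fm) (use sub sea_lmeasurable[OF d] in auto)
  finally show ?thesis unfolding m_def .
qed

lemma alg0:
  fixes t \<epsilon> C1 c2 V a b :: real
  assumes "t > 0" "\<epsilon> > 0" "C1 > 0" "c2 > 0" "V > 0" "a > 0" "b > 0"
  shows "(9/(C1*t))^k * (a*(C1*\<epsilon>*t))^n * V / ((1/(b*t))^(k+j) * (c2*\<epsilon>*t)^n * V)
       = (9^k * a^n * C1^n * b^(k+j) / (C1^k * c2^n)) * t^j"
  using assms by (simp add: power_mult_distrib power_divide power_add field_simps)

lemma alg:
  fixes t \<epsilon> C1 c2 V :: real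
  assumes "t > 0" "\<epsilon> > 0" "C1 > 0" "c2 > 0" "V > 0" "m > 0" "k < m"
  shows "(9*\<epsilon>/(C1*\<epsilon>*t))^k * ((real k+2)*(C1*\<epsilon>*t))^n * V /
          ((\<epsilon>/(16*real m*(c2*\<epsilon>*t)))^m * (c2*\<epsilon>*t)^n * V)
       = (9^k * (real k+2)^n * C1^n * (16*real m*c2)^m / (C1^k * c2^n)) * t^(m-k)"
proof -
  obtain j where j: "m = k + j" using assms(7) less_imp_add_positive by blast
  have e1: "9*\<epsilon>/(C1*\<epsilon>*t) = 9/(C1*t)" using assms by simp
  have e2: "\<epsilon>/(16*real m*(c2*\<epsilon>*t)) = 1/((16*real m*c2)*t)" using assms by (simp add: field_simps)
  have "m - k = j" using j by simp
  then show ?thesis unfolding e1 e2 using alg0[of t \<epsilon> C1 c2 V "real k+2" "16*real m*c2" k n j] assms j by simp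
qed

theorem lemma7p1:
  fixes \<alpha> \<beta> :: "'a::euclidean_space set" and d C1 C2 :: real
  assumes "subspace \<alpha>" and "subspace \<beta>" and "dim \<alpha> < dim \<beta>"
    and "d > 1" and "C1 > 0" and "C2 > 0"
  shows "((\<lambda>\<epsilon>. measure lebesgue (sea_tangle d \<alpha> C1 \<inter> ball 0 \<epsilon>)
              / measure lebesgue (sea_tangle d \<beta> C2 \<inter> ball 0 \<epsilon>)) \<longlongrightarrow> 0) (at_right 0)"
proof -
  define k where "k = dim \<alpha>"
  define m where "m = dim \<beta>"
  define n where "n = DIM('a)"
  define V where "V = measure lborel (ball (0::'a) 1)"
  define c2 where "c2 = C2 / 4 powr d"
  define K where "K = 9^k * (real k+2)^n * C1^n * (16*real m*c2)^m / (C1^k * c2^n)"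
  have km: "k < m" "m > 0" using assms(3) unfolding k_def m_def by auto
  have Vpos: "V > 0" unfolding V_def using content_ball_pos[of 1 "0::'a"] by simp
  have c2pos: "c2 > 0" unfolding c2_def using assms by simp
  have d0: "d > 0" using assms by simp
  have t0: "((\<lambda>\<epsilon>::real. \<epsilon> powr (d-1)) \<longlongrightarrow> 0) (at_right 0)"
  proof (rule tendsto_zero_powrI[where b="d-1"])
    show "((\<lambda>x::real. x) \<longlongrightarrow> 0) (at_right 0)" by (rule tendsto_ident_at)
    show "((\<lambda>x::real. d - 1) \<longlongrightarrow> d - 1) (at_right 0)" by (rule tendsto_const)
    show "\<forall>\<^sub>F x in at_right 0. 0 \<le> (x::real)" using eventually_at_right_less[of "0::real"] by (auto elim: eventually_mono)
    show "0 < d - 1" using assms by simp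
  qed
  have ev1: "eventually (\<lambda>\<epsilon>::real. \<epsilon> powr (d-1) < min (1/C1) (1/(16*real m*c2))) (at_right 0)"
  proof (rule order_tendstoD(2)[OF t0])
    have "0 < 1/C1" "0 < 1/(16*real m*c2)" using assms c2pos km by auto
    then show "0 < min (1/C1) (1/(16*real m*c2))" by simp
  qed
  have ev2: "eventually (\<lambda>\<epsilon>::real. 0 < \<epsilon>) (at_right 0)" by (rule eventually_at_right_less)
  have bound: "measure lebesgue (sea_tangle d \<alpha> C1 \<inter> ball 0 \<epsilon>)
              / measure lebesgue (sea_tangle d \<beta> C2 \<inter> ball 0 \<epsilon>) \<le> K * (\<epsilon> powr (d-1))^(m-k)"
    if e: "0 < \<epsilon>" and tl: "\<epsilon> powr (d-1) < min (1/C1) (1/(16*real m*c2))" for \<epsilon> :: real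
  proof -
    define t where "t = \<epsilon> powr (d-1)"
    have tpos: "t > 0" unfolding t_def using e by simp
    have ed: "\<epsilon> powr d = \<epsilon> * t"
    proof -
      have "\<epsilon> powr d = \<epsilon> powr (1 + (d-1))" by simp
      also have "\<dots> = \<epsilon> powr 1 * \<epsilon> powr (d-1)" by (rule powr_add)
      also have "\<dots> = \<epsilon> * t" unfolding t_def using e by simp
      finally show ?thesis .
    qed
    define \<delta> where "\<delta> = C1 * \<epsilon> * t"
    define r where "r = c2 * \<epsilon> * t"
    have \<delta>pos: "\<delta> > 0" unfolding \<delta>_def using assms e tpos by simp
    have rpos: "r > 0" unfolding r_def using c2pos e tpos by simp
    have "C1 * t \<le> 1" using tl assms unfolding t_def by (simp add: field_simps)
    then have \<delta>le: "\<delta> \<le> \<epsilon>" unfolding \<delta>_def using mult_left_mono[OF \<open>C1 * t \<le> 1\<close>, of \<epsilon>] e by (simp add: algebra_simps)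
    have "16*real m*c2 * t \<le> 1" using tl km c2pos unfolding t_def by (simp add: field_simps)
    then have r16: "16 * real m * r \<le> \<epsilon>" unfolding r_def
      using mult_left_mono[OF \<open>16*real m*c2 * t \<le> 1\<close>, of \<epsilon>] e by (simp add: algebra_simps)
    have rle: "r \<le> C2 * (\<epsilon>/4) powr d"
    proof -
      have "(\<epsilon>/4) powr d = \<epsilon> powr d / 4 powr d" using e by (simp add: powr_divide)
      then show ?thesis unfolding r_def c2_def ed by simp
    qed
    have sub: "sea_tangle d \<alpha> C1 \<inter> ball 0 \<epsilon> \<subseteq> {x. infdist x \<alpha> \<le> \<delta> \<and> norm x < \<epsilon>}"
    proof
      fix x assume "x \<in> sea_tangle d \<alpha> C1 \<inter> ball 0 \<epsilon>"
      then have x: "infdist x \<alpha> \<le> C1 * norm x powr d" "norm x < \<epsilon>" unfolding sea_tangle_def by auto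
      have "norm x powr d \<le> \<epsilon> powr d" using x(2) d0 by (intro powr_mono2) auto
      then have "C1 * norm x powr d \<le> C1 * (\<epsilon> powr d)" using assms by simp
      then have "infdist x \<alpha> \<le> \<delta>" using x(1) unfolding \<delta>_def ed by (simp add: mult.assoc)
      then show "x \<in> {x. infdist x \<alpha> \<le> \<delta> \<and> norm x < \<epsilon>}" using x by simp
    qed
    have U: "measure lebesgue (sea_tangle d \<alpha> C1 \<inter> ball 0 \<epsilon>) \<le> (9*\<epsilon>/\<delta>)^k * ((real k+2)*\<delta>)^n * V"
      using upper_tube[OF assms(1) \<delta>pos \<delta>le sub] unfolding k_def n_def V_def .
    have L: "(\<epsilon>/(16 * real m * r))^m * r^n * V \<le> measure lebesgue (sea_tangle d \<beta> C2 \<inter> ball 0 \<epsilon>)"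
      using lower_tube[OF assms(2) _ assms(6) d0 e rpos rle] km r16 unfolding m_def n_def V_def by simp
    have Lpos: "0 < (\<epsilon>/(16 * real m * r))^m * r^n * V" using e rpos km Vpos by simp
    have "measure lebesgue (sea_tangle d \<alpha> C1 \<inter> ball 0 \<epsilon>)
              / measure lebesgue (sea_tangle d \<beta> C2 \<inter> ball 0 \<epsilon>)
          \<le> ((9*\<epsilon>/\<delta>)^k * ((real k+2)*\<delta>)^n * V) / ((\<epsilon>/(16 * real m * r))^m * r^n * V)"
      by (rule frac_le[OF _ U Lpos L]) (use \<delta>pos e Vpos in simp)
    also have "\<dots> = K * t^(m-k)"
      unfolding K_def \<delta>_def r_def by (rule alg[OF tpos e assms(5) c2pos Vpos km(2) km(1)])
    finally show ?thesis unfolding t_def .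
  qed
  have lim: "((\<lambda>\<epsilon>::real. K * (\<epsilon> powr (d-1))^(m-k)) \<longlongrightarrow> 0) (at_right 0)"
  proof -
    have "((\<lambda>\<epsilon>::real. (\<epsilon> powr (d-1))^(m-k)) \<longlongrightarrow> 0^(m-k)) (at_right 0)"
      by (rule tendsto_power[OF t0])
    moreover have "(0::real)^(m-k) = 0" using km by simp
    ultimately have "((\<lambda>\<epsilon>::real. (\<epsilon> powr (d-1))^(m-k)) \<longlongrightarrow> 0) (at_right 0)" by (simp only:)
    then show ?thesis by (rule tendsto_mult_right_zero)
  qed
  show ?thesis
  proof (rule tendsto_sandwich[OF _ _ tendsto_const lim])
    show "\<forall>\<^sub>F \<epsilon> in at_right 0. 0 \<le> measure lebesgue (sea_tangle d \<alpha> C1 \<inter> ball 0 \<epsilon>)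
              / measure lebesgue (sea_tangle d \<beta> C2 \<inter> ball (0::'a) \<epsilon>)"
      by (intro always_eventually allI divide_nonneg_nonneg measure_nonneg)
    show "\<forall>\<^sub>F \<epsilon> in at_right 0. measure lebesgue (sea_tangle d \<alpha> C1 \<inter> ball 0 \<epsilon>)
              / measure lebesgue (sea_tangle d \<beta> C2 \<inter> ball (0::'a) \<epsilon>) \<le> K * (\<epsilon> powr (d-1))^(m-k)"
      using ev1 ev2 by eventually_elim (rule bound)
  qed
qed

end
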